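(* Let $(X,d)$ be a locally compact metric space with a flow $\pi$ and let $M\subseteq X$. For $\varepsilon,t>0$ put $A_{\varepsilon,t}=\overline{P_t(M,\varepsilon)\cdot[t,\infty)}$. Then $$\bigcap_{\varepsilon>0,\,t>0}P_t(M,\varepsilon)=\bigcap_{\varepsilon>0,\,t>0}A_{\varepsilon,t}.$$
   Context: A flow is a continuous map $\pi: X\times\mathbb{R}\to X$ with $\pi(x,0)=x$ and $\pi(\pi(x,t),s)=\pi(x,t+s)$; write $x\cdot t=\pi(x,t)$ and $Y\cdot T=\{y\cdot s: y\in Y, s\in T\}$. For $x,y\in X$ and $\varepsilon,t>0$, an $(\varepsilon,t)$-chain from $x$ to $y$ is a pair of finite sequences $x=x_1,\dots,x_{n+1}=y$ in $X$ and $t_1,\dots,t_n$ in $\mathbb{R}^+$ with $t_i\ge t$ and $d(x_i\cdot t_i,x_{i+1})\le\varepsilon$ for all $i$. $P_t(M,\varepsilon)$ is the set of $y\in X$ such that there is an $(\varepsilon,t)$-chain from $x$ to $y$ for some $x\in M$. *)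

theory Defs
  imports "HOL-Analysis.Analysis"
begin

definition is_flow :: "('a::metric_space \<Rightarrow> real \<Rightarrow> 'a) \<Rightarrow> bool" where
  "is_flow \<pi> \<longleftrightarrow> continuous_on UNIV (\<lambda>p. \<pi> (fst p) (snd p))
     \<and> (\<forall>x. \<pi> x 0 = x) \<and> (\<forall>x t s. \<pi> (\<pi> x t) s = \<pi> x (t + s))"

definition chain :: "('a::metric_space \<Rightarrow> real \<Rightarrow> 'a) \<Rightarrow> real \<Rightarrow> real \<Rightarrow> 'a \<Rightarrow> 'a \<Rightarrow> bool" where
  "chain \<pi> \<epsilon> t x y \<longleftrightarrow> (\<exists>n::nat. n \<ge> 1 \<and> (\<exists>xs ts. xs 0 = x \<and> xs n = y \<and>
     (\<forall>i<n. ts i \<ge> t \<and> dist (\<pi> (xs i) (ts i)) (xs (Suc i)) \<le> \<epsilon>)))"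

definition P_set :: "('a::metric_space \<Rightarrow> real \<Rightarrow> 'a) \<Rightarrow> real \<Rightarrow> 'a set \<Rightarrow> real \<Rightarrow> 'a set" where
  "P_set \<pi> t M \<epsilon> = {y. \<exists>x\<in>M. chain \<pi> \<epsilon> t x y}"

definition flow_img :: "('a \<Rightarrow> real \<Rightarrow> 'a) \<Rightarrow> 'a set \<Rightarrow> real set \<Rightarrow> 'a set" where
  "flow_img \<pi> Y T = {\<pi> y s | y s. y \<in> Y \<and> s \<in> T}"

end

theory Submission
  imports Defs
begin

lemma chain_mono:
  assumes "chain \<pi> d t' x y" "d \<le> e" "t \<le> t'"
  shows "chain \<pi> e t x y"
proof -
  obtain n xs ts where n: "n \<ge> 1" "xs 0 = x" "xs n = y"
    and st: "\<forall>i<n. ts i \<ge> t' \<and> dist (\<pi> (xs i) (ts i)) (xs (Suc i)) \<le> d"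
    using assms(1) unfolding chain_def by blast
  have "\<forall>i<n. ts i \<ge> t \<and> dist (\<pi> (xs i) (ts i)) (xs (Suc i)) \<le> e"
    using st assms(2,3) by (meson order_trans)
  then show ?thesis unfolding chain_def using n by blast
qed

lemma chain_last:
  assumes "chain \<pi> e t x y"
  shows "\<exists>w. (w = x \<or> chain \<pi> e t x w) \<and> (\<exists>s\<ge>t. dist (\<pi> w s) y \<le> e)"
proof -
  obtain n xs ts where n: "n \<ge> 1" "xs 0 = x" "xs n = y"
    and st: "\<forall>i<n. ts i \<ge> t \<and> dist (\<pi> (xs i) (ts i)) (xs (Suc i)) \<le> e"
    using assms unfolding chain_def by blast
  have "xs (n-1) = x \<or> chain \<pi> e t x (xs (n-1))"
  proof (cases "n - 1 = 0")
    case True then show ?thesis using n by simp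
  next
    case False
    then have "chain \<pi> e t x (xs (n-1))" unfolding chain_def
      using n st by (intro exI[of _ "n-1"]) (auto intro!: exI[of _ xs] exI[of _ ts])
    then show ?thesis by simp
  qed
  moreover have "ts (n-1) \<ge> t \<and> dist (\<pi> (xs (n-1)) (ts (n-1))) y \<le> e"
  proof -
    have "n - 1 < n" "Suc (n-1) = n" using n by auto
    then show ?thesis using st n(3) by metis
  qed
  ultimately show ?thesis by blast
qed

lemma chain_step:
  assumes "w = x \<or> chain \<pi> e t x w" "s \<ge> t" "dist (\<pi> w s) y \<le> e"
  shows "chain \<pi> e t x y"
  using assms(1)
proof
  assume "w = x"
  define xs :: "nat \<Rightarrow> _" where "xs = (\<lambda>i. if i = 0 then x else y)"
  have "\<forall>i<1. (\<lambda>_. s) i \<ge> t \<and> dist (\<pi> (xs i) ((\<lambda>_. s) i)) (xs (Suc i)) \<le> e"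
    using assms(2,3) \<open>w = x\<close> unfolding xs_def by simp
  moreover have "xs 0 = x" "xs 1 = y" unfolding xs_def by simp_all
  ultimately show ?thesis unfolding chain_def
    by (intro exI[of _ "1::nat"] conjI exI[of _ xs] exI[of _ "\<lambda>_. s"]) simp_all
next
  assume "chain \<pi> e t x w"
  then obtain n xs ts where n: "n \<ge> 1" "xs 0 = x" "xs n = w"
    and st: "\<forall>i<n. ts i \<ge> t \<and> dist (\<pi> (xs i) (ts i)) (xs (Suc i)) \<le> e"
    unfolding chain_def by blast
  define xs' where "xs' = xs(Suc n := y)"
  define ts' where "ts' = ts(n := s)"
  have "\<forall>i<Suc n. ts' i \<ge> t \<and> dist (\<pi> (xs' i) (ts' i)) (xs' (Suc i)) \<le> e"
  proof (intro allI impI)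
    fix i assume "i < Suc n"
    then consider "i < n" | "i = n" by linarith
    then show "ts' i \<ge> t \<and> dist (\<pi> (xs' i) (ts' i)) (xs' (Suc i)) \<le> e"
    proof cases
      case 1 then show ?thesis using st unfolding xs'_def ts'_def by simp
    next
      case 2 then show ?thesis using assms(2,3) n(3) unfolding xs'_def ts'_def by simp
    qed
  qed
  moreover have "xs' 0 = x" "xs' (Suc n) = y" using n unfolding xs'_def by auto
  ultimately show ?thesis unfolding chain_def by (intro exI[of _ "Suc n"] conjI exI[of _ xs'] exI[of _ ts']) simp_all
qed

theorem lemma3p4:
  fixes \<pi> :: "'a::metric_space \<Rightarrow> real \<Rightarrow> 'a" and M :: "'a set"
  assumes "locally compact (UNIV :: 'a set)"
    and "is_flow \<pi>"
  shows "(\<Inter>\<epsilon>\<in>{0<..}. \<Inter>t\<in>{0<..}. P_set \<pi> t M \<epsilon>)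
       = (\<Inter>\<epsilon>\<in>{0<..}. \<Inter>t\<in>{0<..}. closure (flow_img \<pi> (P_set \<pi> t M \<epsilon>) {t..}))"
proof (intro equalityI subsetI)
  have fl: "\<And>x a b. \<pi> (\<pi> x a) b = \<pi> x (a + b)" using assms(2) unfolding is_flow_def by blast
  fix y assume y: "y \<in> (\<Inter>\<epsilon>\<in>{0<..}. \<Inter>t\<in>{0<..}. P_set \<pi> t M \<epsilon>)"
  show "y \<in> (\<Inter>\<epsilon>\<in>{0<..}. \<Inter>t\<in>{0<..}. closure (flow_img \<pi> (P_set \<pi> t M \<epsilon>) {t..}))"
  proof (intro INT_I)
    fix \<epsilon> t :: real assume e: "\<epsilon> \<in> {0<..}" and t: "t \<in> {0<..}"
    show "y \<in> closure (flow_img \<pi> (P_set \<pi> t M \<epsilon>) {t..})"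
      unfolding closure_approachable
    proof (intro allI impI)
      fix r :: real assume r: "r > 0"
      define d where "d = min \<epsilon> (r/2)"
      have d: "d > 0" "d \<le> \<epsilon>" "d < r" using e r unfolding d_def by auto
      have "y \<in> P_set \<pi> (2*t) M d" using y d t by auto
      then obtain x where x: "x \<in> M" "chain \<pi> d (2*t) x y" unfolding P_set_def by blast
      from chain_last[OF x(2)] obtain w s where w: "w = x \<or> chain \<pi> d (2*t) x w"
        and s: "s \<ge> 2*t" "dist (\<pi> w s) y \<le> d" by blast
      have w': "w = x \<or> chain \<pi> \<epsilon> t x w" using w chain_mono[of \<pi> d "2*t" x w \<epsilon> t] d t by auto
      have "chain \<pi> \<epsilon> t x (\<pi> w (s - t))"
        by (rule chain_step[OF w', of "s - t"]) (use s t e in auto)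
      then have z: "\<pi> w (s - t) \<in> P_set \<pi> t M \<epsilon>" using x unfolding P_set_def by blast
      have eq: "\<pi> (\<pi> w (s - t)) t = \<pi> w s" using fl by simp
      have "\<pi> w s \<in> flow_img \<pi> (P_set \<pi> t M \<epsilon>) {t..}"
        unfolding flow_img_def mem_Collect_eq
        by (rule exI[of _ "\<pi> w (s - t)"], rule exI[of _ t]) (use z eq in simp)
      then show "\<exists>x'\<in>flow_img \<pi> (P_set \<pi> t M \<epsilon>) {t..}. dist x' y < r"
        using s d by (intro bexI[of _ "\<pi> w s"]) auto
    qed
  qed
next
  fix y assume y: "y \<in> (\<Inter>\<epsilon>\<in>{0<..}. \<Inter>t\<in>{0<..}. closure (flow_img \<pi> (P_set \<pi> t M \<epsilon>) {t..}))"
  show "y \<in> (\<Inter>\<epsilon>\<in>{0<..}. \<Inter>t\<in>{0<..}. P_set \<pi> t M \<epsilon>)"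
  proof (intro INT_I)
    fix \<epsilon> t :: real assume e: "\<epsilon> \<in> {0<..}" and t: "t \<in> {0<..}"
    have "y \<in> closure (flow_img \<pi> (P_set \<pi> t M \<epsilon>) {t..})" using y e t by blast
    then obtain p where p: "p \<in> flow_img \<pi> (P_set \<pi> t M \<epsilon>) {t..}" "dist p y < \<epsilon>"
      using e unfolding closure_approachable by auto
    then obtain z s where zs: "p = \<pi> z s" "z \<in> P_set \<pi> t M \<epsilon>" "s \<ge> t"
      unfolding flow_img_def by auto
    then obtain x where x: "x \<in> M" "chain \<pi> \<epsilon> t x z" unfolding P_set_def by blast
    have "chain \<pi> \<epsilon> t x y"
      by (rule chain_step[of z x]) (use x zs p in auto)
    then show "y \<in> P_set \<pi> t M \<epsilon>" using x unfolding P_set_def by blast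
  qed
qed

end
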